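(* Let $A$ be a bounded linear operator on a complex Hilbert space $\mathcal{H}$ whose numerical range $W(A) = \{\langle Ax, x\rangle : x \in \mathcal{H}, \|x\| = 1\}$ is elliptical, i.e. (up to closure) $W(A)$ is a region in $\mathbb{C}$ bounded by an ellipse. Then \[ \|A^*A - AA^*\| \le \frac{4}{\pi}\, S(W(A)), \] where $S(W(A))$ denotes the area (planar Lebesgue measure) of $W(A)$. *)

theory Defs
  imports "HOL-Analysis.Analysis"
begin

text \<open>Complex inner product spaces (not available in the distribution):
  a real normed vector space with a complex scalar multiplication extending the
  real one and an inner product, linear in the first argument and conjugate
  symmetric, inducing the norm. A complex Hilbert space is such a space that is
  moreover complete (sort complete_space).\<close>

class complex_inner_space = real_normed_vector +
  fixes scaleC :: "complex \<Rightarrow> 'a \<Rightarrow> 'a"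
    and cinner :: "'a \<Rightarrow> 'a \<Rightarrow> complex"
  assumes scaleC_add_right: "scaleC c (x + y) = scaleC c x + scaleC c y"
    and scaleC_add_left: "scaleC (c + d) x = scaleC c x + scaleC d x"
    and scaleC_scaleC: "scaleC c (scaleC d x) = scaleC (c * d) x"
    and scaleC_one: "scaleC 1 x = x"
    and scaleC_of_real: "scaleC (complex_of_real r) x = scaleR r x"
    and cinner_add_left: "cinner (x + y) z = cinner x z + cinner y z"
    and cinner_scaleC_left: "cinner (scaleC c x) y = c * cinner x y"
    and cinner_commute: "cinner y x = cnj (cinner x y)"
    and cinner_self_norm: "cinner x x = complex_of_real ((norm x)\<^sup>2)"

definition clinear :: "('a::complex_inner_space \<Rightarrow> 'b::complex_inner_space) \<Rightarrow> bool" where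
  "clinear A \<longleftrightarrow> (\<forall>x y. A (x + y) = A x + A y) \<and> (\<forall>c x. A (scaleC c x) = scaleC c (A x))"

definition bounded_clinear :: "('a::complex_inner_space \<Rightarrow> 'b::complex_inner_space) \<Rightarrow> bool" where
  "bounded_clinear A \<longleftrightarrow> clinear A \<and> (\<exists>K. \<forall>x. norm (A x) \<le> norm x * K)"

definition is_adjoint :: "('a::complex_inner_space \<Rightarrow> 'a) \<Rightarrow> ('a \<Rightarrow> 'a) \<Rightarrow> bool" where
  "is_adjoint A B \<longleftrightarrow> (\<forall>x y. cinner (A x) y = cinner x (B y))"

definition numerical_range :: "('a::complex_inner_space \<Rightarrow> 'a) \<Rightarrow> complex set" where
  "numerical_range A = {cinner (A x) x | x. norm x = 1}"

definition elliptical_disc :: "complex \<Rightarrow> complex \<Rightarrow> real \<Rightarrow> complex set" where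
  "elliptical_disc f1 f2 a = {z. cmod (z - f1) + cmod (z - f2) \<le> 2 * a}"

definition elliptical :: "complex set \<Rightarrow> bool" where
  "elliptical W \<longleftrightarrow> (\<exists>f1 f2 a. cmod (f1 - f2) < 2 * a \<and> closure W = elliptical_disc f1 f2 a)"

end

theory Submission
  imports Defs
begin


lemma scaleC_zero_right[simp]: "scaleC c (0::'a::complex_inner_space) = 0"
proof -
  have "scaleC c (0::'a) = scaleC c 0 + scaleC c 0" by (metis add_0 scaleC_add_right)
  then show ?thesis by simp
qed

lemma scaleC_zero_left[simp]: "scaleC 0 (x::'a::complex_inner_space) = 0"
proof -
  have "scaleC (of_real 0) x = 0 *\<^sub>R x" by (rule scaleC_of_real)
  then show ?thesis by simp
qed

lemma scaleC_minus_right: "scaleC c (- x::'a::complex_inner_space) = - scaleC c x"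
proof -
  have "scaleC c (- x) + scaleC c x = 0" by (simp flip: scaleC_add_right)
  then show ?thesis by (simp add: eq_neg_iff_add_eq_0)
qed

lemma scaleC_diff_right: "scaleC c (x - y::'a::complex_inner_space) = scaleC c x - scaleC c y"
  by (simp only: diff_conv_add_uminus scaleC_add_right scaleC_minus_right)

lemma scaleC_minus_left: "scaleC (- c) (x::'a::complex_inner_space) = - scaleC c x"
proof -
  have "scaleC (- c) x + scaleC c x = 0" by (simp flip: scaleC_add_left)
  then show ?thesis by (simp add: eq_neg_iff_add_eq_0)
qed

lemma scaleC_diff_left: "scaleC (c - d) (x::'a::complex_inner_space) = scaleC c x - scaleC d x"
  by (simp only: diff_conv_add_uminus scaleC_add_left scaleC_minus_left)

lemma cinner_zero_left[simp]: "cinner 0 (y::'a::complex_inner_space) = 0"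
proof -
  have "cinner (scaleC 0 0) y = 0 * cinner (0::'a) y" by (rule cinner_scaleC_left)
  then show ?thesis by simp
qed

lemma cinner_zero_right[simp]: "cinner x (0::'a::complex_inner_space) = 0"
  by (subst cinner_commute) simp

lemma cinner_add_right: "cinner x (y + z::'a::complex_inner_space) = cinner x y + cinner x z"
  by (subst (1 2 3) cinner_commute) (simp add: cinner_add_left)

lemma cinner_scaleC_right: "cinner x (scaleC c y::'a::complex_inner_space) = cnj c * cinner x y"
  by (subst (1 2) cinner_commute) (simp add: cinner_scaleC_left)

lemma cinner_minus_left: "cinner (- x) (y::'a::complex_inner_space) = - cinner x y"
proof -
  have "cinner (- x) y + cinner x y = 0" by (simp flip: cinner_add_left)
  then show ?thesis by (simp add: eq_neg_iff_add_eq_0)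
qed

lemma cinner_minus_right: "cinner x (- y::'a::complex_inner_space) = - cinner x y"
  by (subst (1 2) cinner_commute) (simp add: cinner_minus_left)

lemma cinner_diff_left: "cinner (x - y) (z::'a::complex_inner_space) = cinner x z - cinner y z"
  by (simp only: diff_conv_add_uminus cinner_add_left cinner_minus_left)

lemma cinner_diff_right: "cinner x (y - z::'a::complex_inner_space) = cinner x y - cinner x z"
  by (simp only: diff_conv_add_uminus cinner_add_right cinner_minus_right)

lemma cinner_scaleR_left: "cinner (scaleR r x) (y::'a::complex_inner_space) = of_real r * cinner x y"
  by (simp add: cinner_scaleC_left flip: scaleC_of_real)

lemma cinner_scaleR_right: "cinner x (scaleR r y::'a::complex_inner_space) = of_real r * cinner x y"
  by (simp add: cinner_scaleC_right flip: scaleC_of_real)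

lemma cinner_self_Re: "Re (cinner x (x::'a::complex_inner_space)) = (norm x)\<^sup>2"
  by (simp add: cinner_self_norm)

lemma cinner_self_Im: "Im (cinner x (x::'a::complex_inner_space)) = 0"
  by (simp add: cinner_self_norm)

lemma cinner_eq_zeroI: "(\<And>y. cinner x y = 0) \<Longrightarrow> (x::'a::complex_inner_space) = 0"
proof -
  assume "\<And>y. cinner x y = 0"
  then have "cinner x x = 0" by simp
  then have "complex_of_real ((norm x)\<^sup>2) = 0" by (simp add: cinner_self_norm)
  then show ?thesis by simp
qed

lemma norm_scaleC: "norm (scaleC c (x::'a::complex_inner_space)) = cmod c * norm x"
proof -
  have "(norm (scaleC c x))\<^sup>2 = Re (cinner (scaleC c x) (scaleC c x))" by (simp add: cinner_self_Re)
  also have "\<dots> = Re (c * cnj c * cinner x x)"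
    unfolding cinner_scaleC_left cinner_scaleC_right by (metis mult.left_commute mult.assoc)
  also have "\<dots> = (cmod c * norm x)\<^sup>2"
    by (simp add: cinner_self_norm complex_mult_cnj power_mult_distrib cmod_power2 del: of_real_power)
  finally show ?thesis
    by (metis norm_ge_zero power2_eq_imp_eq mult_nonneg_nonneg)
qed


lemma Re_cinner_le: "Re (cinner x y) \<le> norm x * norm (y::'a::complex_inner_space)"
proof -
  define s where "s = norm y" define t where "t = norm x"
  have e: "Re (cinner y x) = Re (cinner x y)" by (subst cinner_commute) simp
  have "0 \<le> Re (cinner (scaleR s x - scaleR t y) (scaleR s x - scaleR t y))"
    by (simp add: cinner_self_Re)
  also have "\<dots> = s * s * Re (cinner x x) - s * t * Re (cinner x y) - t * s * Re (cinner y x) + t * t * Re (cinner y y)"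
    by (simp add: cinner_diff_left cinner_diff_right cinner_scaleR_left cinner_scaleR_right algebra_simps)
  finally have h: "2 * (s * t) * Re (cinner x y) \<le> 2 * (s*t) * (s * t)"
    unfolding e cinner_self_Re s_def[symmetric] t_def[symmetric] power2_eq_square 
    by (simp add: s_def t_def algebra_simps)
  show ?thesis
  proof (cases "s * t = 0")
    case True
    then show ?thesis unfolding s_def t_def by auto
  next
    case False
    then have "2 * (s * t) > 0" using s_def t_def by (simp add: less_le)
    then have "Re (cinner x y) \<le> s * t" using h
      by (simp only: mult_le_cancel_left_pos)
    then show ?thesis by (simp add: s_def t_def mult.commute)
  qed
qed

lemma cinner_cauchy: "cmod (cinner x y) \<le> norm x * norm (y::'a::complex_inner_space)"
proof (cases "cinner x y = 0")
  case False
  define c where "c = cinner x y / of_real (cmod (cinner x y))"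
  have c1: "cmod c = 1" using False by (simp add: c_def norm_divide)
  have "cinner x (scaleC c y) = cnj c * cinner x y" by (rule cinner_scaleC_right)
  also have "\<dots> = of_real (cmod (cinner x y))"
  proof -
    have "cnj (cinner x y) * cinner x y = of_real ((cmod (cinner x y))^2)"
      using complex_norm_square[of "cinner x y"] by (simp add: mult.commute)
    then show ?thesis using False unfolding c_def
      by (simp add: power2_eq_square field_simps)
  qed
  finally have "cmod (cinner x y) = Re (cinner x (scaleC c y))" by simp
  also have "\<dots> \<le> norm x * norm (scaleC c y)" by (rule Re_cinner_le)
  finally show ?thesis by (simp add: norm_scaleC c1)
qed simp


lemma parallelogram_c: "(norm (x + y))\<^sup>2 + (norm (x - y))\<^sup>2 = 2 * (norm x)\<^sup>2 + 2 * (norm (y::'a::complex_inner_space))\<^sup>2"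
proof -
  have "(norm (x + y))\<^sup>2 + (norm (x - y))\<^sup>2 = Re (cinner (x+y) (x+y)) + Re (cinner (x-y) (x-y))"
    by (simp add: cinner_self_Re)
  also have "\<dots> = 2 * Re (cinner x x) + 2 * Re (cinner y y)"
    by (simp add: cinner_add_left cinner_add_right cinner_diff_left cinner_diff_right)
  finally show ?thesis by (simp add: cinner_self_Re)
qed

lemma sa_bound:
  fixes H :: "'a::complex_inner_space \<Rightarrow> 'a"
  assumes add: "\<And>x y. H (x + y) = H x + H y"
    and sym: "\<And>x y. cinner (H x) y = cinner x (H y)"
    and bnd: "\<And>x. \<bar>Re (cinner (H x) x)\<bar> \<le> a * (norm x)\<^sup>2"
  shows "norm (H x) \<le> a * norm x"
proof -
  have H0: "H 0 = 0" using add[of 0 0] by simp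
  have Hdiff: "H (u - v) = H u - H v" for u v
    using add[of "u - v" v] by (simp add: algebra_simps)
  have ReSym: "Re (cinner (H v) u) = Re (cinner (H u) v)" for u v
    by (subst cinner_commute) (simp add: sym)
  have pol: "4 * Re (cinner (H x) y) \<le> 2 * a * ((norm x)\<^sup>2 + (norm y)\<^sup>2)" for y
  proof -
    have "Re (cinner (H (x + y)) (x + y)) - Re (cinner (H (x - y)) (x - y))
        = 2 * Re (cinner (H x) y) + 2 * Re (cinner (H y) x)"
      by (simp add: add Hdiff cinner_add_left cinner_add_right cinner_diff_left cinner_diff_right)
    also have "\<dots> = 4 * Re (cinner (H x) y)" by (simp add: ReSym)
    finally have e: "4 * Re (cinner (H x) y) = Re (cinner (H (x + y)) (x + y)) - Re (cinner (H (x - y)) (x - y))" ..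
    have "\<dots> \<le> a * (norm (x + y))\<^sup>2 + a * (norm (x - y))\<^sup>2"
      using bnd[of "x + y"] bnd[of "x - y"] by linarith
    also have "\<dots> = a * ((norm (x + y))\<^sup>2 + (norm (x - y))\<^sup>2)" by (simp add: distrib_left)
    also have "\<dots> = 2 * a * ((norm x)\<^sup>2 + (norm y)\<^sup>2)"
      unfolding parallelogram_c by (simp add: algebra_simps)
    finally show ?thesis using e by simp
  qed
  show ?thesis
  proof (cases "x = 0")
    case True
    then show ?thesis by (simp add: H0)
  next
    case False
    then have X: "norm x > 0" by simp
    have a0: "a \<ge> 0"
    proof -
      have "0 \<le> a * (norm x)\<^sup>2" using bnd[of x] by linarith
      then show ?thesis using X by (simp add: zero_le_mult_iff)
    qed
    show ?thesis
    proof (cases "H x = 0")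
      case True
      then show ?thesis using a0 by simp
    next
      case False
      then have N: "norm (H x) > 0" by simp
      define t where "t = norm x / norm (H x)"
      have t0: "t > 0" using X N by (simp add: t_def)
      have ineq: "4 * Re (cinner (H x) (scaleR t (H x))) \<le> 2 * a * ((norm x)\<^sup>2 + (norm (scaleR t (H x)))\<^sup>2)"
        by (rule pol)
      have r1: "Re (cinner (H x) (scaleR t (H x))) = norm x * norm (H x)"
        using N by (simp add: cinner_scaleR_right cinner_self_Re t_def power2_eq_square)
      have r2: "norm (scaleR t (H x)) = norm x" using t0 N by (simp add: t_def)
      have "4 * (norm x * norm (H x)) \<le> 2 * a * ((norm x)\<^sup>2 + (norm x)\<^sup>2)"
        using ineq unfolding r1 r2 .
      then have "(norm x * norm (H x)) * 4 \<le> (norm x * (a * norm x)) * 4"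
        by (simp add: power2_eq_square algebra_simps)
      then have "norm x * norm (H x) \<le> norm x * (a * norm x)" by simp
      then show ?thesis using X by (simp add: mult_le_cancel_left_pos)
    qed
  qed
qed

lemma comm_bound:
  fixes B Bs :: "'a::complex_inner_space \<Rightarrow> 'a"
  assumes addB: "\<And>x y. B (x + y) = B x + B y"
    and addBs: "\<And>x y. Bs (x + y) = Bs x + Bs y"
    and adj: "\<And>x y. cinner (B x) y = cinner x (Bs y)"
    and re: "\<And>x. \<bar>Re (cinner (B x) x)\<bar> \<le> a * (norm x)\<^sup>2"
    and im: "\<And>x. \<bar>Im (cinner (B x) x)\<bar> \<le> b * (norm x)\<^sup>2"
  shows "cmod (cinner (B x) (B y) - cinner (Bs x) (Bs y)) \<le> 4 * a * b * norm x * norm y"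
proof -
  have adj2: "cinner (Bs u) v = cinner u (B v)" for u v
    by (metis adj cinner_commute)
  define H where "H u = scaleC (1/2) (B u + Bs u)" for u
  define K where "K u = scaleC (- \<i>/2) (B u - Bs u)" for u
  have Hadd: "H (u + v) = H u + H v" for u v
    by (simp add: H_def addB addBs scaleC_add_right[symmetric] algebra_simps)
  have Kadd: "K (u + v) = K u + K v" for u v
    by (simp add: K_def addB addBs scaleC_add_right[symmetric] algebra_simps)
  have Hsym: "cinner (H u) v = cinner u (H v)" for u v
    by (simp add: H_def cinner_scaleC_left cinner_scaleC_right cinner_add_left cinner_add_right adj adj2 algebra_simps)
  have Ksym: "cinner (K u) v = cinner u (K v)" for u v
    by (simp add: K_def cinner_scaleC_left cinner_scaleC_right cinner_diff_left cinner_diff_right adj adj2 algebra_simps)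
  have cBs: "cinner (Bs u) u = cnj (cinner (B u) u)" for u
    by (metis adj2 cinner_commute)
  have HRe: "Re (cinner (H u) u) = Re (cinner (B u) u)" for u
    by (simp add: H_def cinner_scaleC_left cinner_add_left cBs)
  have KRe: "Re (cinner (K u) u) = Im (cinner (B u) u)" for u
    by (simp add: K_def cinner_scaleC_left cinner_diff_left cBs)
  have Hn: "norm (H u) \<le> a * norm u" for u
    by (rule sa_bound[OF Hadd Hsym]) (simp add: HRe re)
  have Kn: "norm (K u) \<le> b * norm u" for u
    by (rule sa_bound[OF Kadd Ksym]) (simp add: KRe im)
  have eq: "cinner (B x) (B y) - cinner (Bs x) (Bs y) = 2 * \<i> * (cinner (K x) (H y) - cinner (H x) (K y))"
    by (simp add: H_def K_def cinner_scaleC_left cinner_scaleC_right cinner_add_left cinner_add_right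
        cinner_diff_left cinner_diff_right algebra_simps)
  have "cmod (cinner (B x) (B y) - cinner (Bs x) (Bs y)) \<le> 2 * (cmod (cinner (K x) (H y)) + cmod (cinner (H x) (K y)))"
    unfolding eq using norm_triangle_ineq4[of "cinner (K x) (H y)" "cinner (H x) (K y)"] by (simp add: norm_mult)
  also have "\<dots> \<le> 2 * (norm (K x) * norm (H y) + norm (H x) * norm (K y))"
    using cinner_cauchy[of "K x" "H y"] cinner_cauchy[of "H x" "K y"] by simp
  also have "\<dots> \<le> 2 * (b * norm x * (a * norm y) + a * norm x * (b * norm y))"
  proof -
    have 1: "0 \<le> b * norm x" using Kn[of x] norm_ge_zero[of "K x"] by linarith
    have 2: "0 \<le> a * norm x" using Hn[of x] norm_ge_zero[of "H x"] by linarith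
    show ?thesis
      by (intro mult_left_mono add_mono mult_mono Hn Kn 1 2 norm_ge_zero) simp_all
  qed
  also have "\<dots> = 4 * a * b * norm x * norm y" by (simp add: algebra_simps)
  finally show ?thesis .
qed


lemma sqrt_lt_of_sq: "x < y\<^sup>2 \<Longrightarrow> 0 < y \<Longrightarrow> sqrt x < y"
  using real_sqrt_less_mono[of x "y^2"] by simp

lemma sqrt_le_of_sq: "x \<le> y\<^sup>2 \<Longrightarrow> 0 \<le> y \<Longrightarrow> sqrt x \<le> y"
  using real_sqrt_le_mono[of x "y^2"] by simp

lemma sq_le_of_sqrt: "y\<^sup>2 \<le> x \<Longrightarrow> 0 \<le> y \<Longrightarrow> y \<le> sqrt x"
  using real_sqrt_le_mono[of "y^2" x] by simp

lemma sq_lt_of_sqrt: "y\<^sup>2 < x \<Longrightarrow> 0 \<le> y \<Longrightarrow> y < sqrt x"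
  using real_sqrt_less_mono[of "y^2" x] by simp

lemma ell_core:
  fixes a b c u v :: real
  assumes c0: "0 \<le> c" and ca: "c < a" and b: "b\<^sup>2 = a\<^sup>2 - c\<^sup>2"
  shows "sqrt ((u+c)\<^sup>2+v\<^sup>2) + sqrt ((u-c)\<^sup>2+v\<^sup>2) < 2*a \<longleftrightarrow> b\<^sup>2 * u\<^sup>2 + a\<^sup>2 * v\<^sup>2 < a\<^sup>2 * b\<^sup>2"
    and "sqrt ((u+c)\<^sup>2+v\<^sup>2) + sqrt ((u-c)\<^sup>2+v\<^sup>2) \<le> 2*a \<longleftrightarrow> b\<^sup>2 * u\<^sup>2 + a\<^sup>2 * v\<^sup>2 \<le> a\<^sup>2 * b\<^sup>2"
proof -
  define p where "p = sqrt ((u+c)\<^sup>2+v\<^sup>2)"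
  define q where "q = sqrt ((u-c)\<^sup>2+v\<^sup>2)"
  define P where "P = a + c*u/a"
  define Q where "Q = a - c*u/a"
  define D where "D = a\<^sup>2 * b\<^sup>2 - b\<^sup>2 * u\<^sup>2 - a\<^sup>2 * v\<^sup>2"
  have a0: "a > 0" using c0 ca by linarith
  have b0: "b\<^sup>2 > 0" using b c0 ca by (simp add: power_strict_mono)
  have PD: "P\<^sup>2 - ((u+c)\<^sup>2+v\<^sup>2) = D / a\<^sup>2"
    using a0 unfolding P_def D_def b by (simp add: field_simps power2_eq_square)
  have QD: "Q\<^sup>2 - ((u-c)\<^sup>2+v\<^sup>2) = D / a\<^sup>2"
    using a0 unfolding Q_def D_def b by (simp add: field_simps power2_eq_square)
  have DS: "D / a\<^sup>2 > 0 \<longleftrightarrow> D > 0" "D / a\<^sup>2 \<ge> 0 \<longleftrightarrow> D \<ge> 0"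
    using a0 by (simp_all add: zero_less_divide_iff zero_le_divide_iff)
  have SP: "(u+c)\<^sup>2+v\<^sup>2 < P\<^sup>2 \<longleftrightarrow> D > 0" "(u+c)\<^sup>2+v\<^sup>2 \<le> P\<^sup>2 \<longleftrightarrow> D \<ge> 0"
    using PD DS by linarith+
  have SQ: "(u-c)\<^sup>2+v\<^sup>2 < Q\<^sup>2 \<longleftrightarrow> D > 0" "(u-c)\<^sup>2+v\<^sup>2 \<le> Q\<^sup>2 \<longleftrightarrow> D \<ge> 0"
    using QD DS by linarith+
  have pq_big: "p + q \<ge> 2 * \<bar>u\<bar>"
  proof -
    have "\<bar>u + c\<bar> \<le> p" unfolding p_def by (rule sq_le_of_sqrt) simp_all
    moreover have "\<bar>u - c\<bar> \<le> q" unfolding q_def by (rule sq_le_of_sqrt) simp_all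
    ultimately show ?thesis by linarith
  qed
  have p0: "p \<ge> 0" "q \<ge> 0" by (simp_all add: p_def q_def)
  have PQ: "P + Q = 2 * a" by (simp add: P_def Q_def)
  have Ppos: "P > 0 \<and> Q > 0" if "\<bar>u\<bar> < a"
  proof -
    have "\<bar>c * u\<bar> < a * a"
      using that c0 ca a0 by (simp add: abs_mult) (metis abs_ge_zero le_less_trans mult_le_less_imp_less mult_strict_mono' order_less_imp_le)
    then have "\<bar>c * u / a\<bar> < a" using a0 by (simp add: abs_mult divide_less_eq)
    then show ?thesis unfolding P_def Q_def using abs_less_iff[of "c*u/a" a] by linarith
  qed
  have Pnn: "P \<ge> 0 \<and> Q \<ge> 0" if "\<bar>u\<bar> \<le> a"
  proof -
    have "\<bar>c * u\<bar> \<le> a * a"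
      using that c0 ca a0 by (simp add: abs_mult mult_mono)
    then have "\<bar>c * u / a\<bar> \<le> a" using a0 by (simp add: abs_mult divide_le_eq)
    then show ?thesis unfolding P_def Q_def using abs_le_iff[of "c*u/a" a] by linarith
  qed
  have usq: "u\<^sup>2 < a\<^sup>2" if "D > 0"
  proof -
    have "0 \<le> a\<^sup>2 * v\<^sup>2" by simp
    then have "b\<^sup>2 * u\<^sup>2 < b\<^sup>2 * a\<^sup>2" using that unfolding D_def mult.commute[of "b\<^sup>2" "a\<^sup>2"] by linarith
    then show ?thesis using b0 by simp
  qed
  have usq': "u\<^sup>2 \<le> a\<^sup>2" if "D \<ge> 0"
  proof -
    have "0 \<le> a\<^sup>2 * v\<^sup>2" by simp
    then have "b\<^sup>2 * u\<^sup>2 \<le> b\<^sup>2 * a\<^sup>2" using that unfolding D_def mult.commute[of "b\<^sup>2" "a\<^sup>2"] by linarith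
    then show ?thesis using b0 by simp
  qed
  have lt: "p + q < 2 * a \<longleftrightarrow> D > 0"
  proof
    assume D: "D > 0"
    then have ua: "\<bar>u\<bar> < a" using usq a0 by (simp add: abs_less_iff power2_less_imp_less abs_square_less_1)
    have "p < P" unfolding p_def using SP D Ppos[OF ua] by (intro sqrt_lt_of_sq) simp_all
    moreover have "q < Q" unfolding q_def using SQ D Ppos[OF ua] by (intro sqrt_lt_of_sq) simp_all
    ultimately show "p + q < 2 * a" using PQ by linarith
  next
    assume pq: "p + q < 2 * a"
    show "D > 0"
    proof (rule ccontr)
      assume "\<not> D > 0"
      then have D: "D \<le> 0" by simp
      show False
      proof (cases "\<bar>u\<bar> < a")
        case True
        have "P \<le> p" unfolding p_def using SP D Ppos[OF True] by (intro sq_le_of_sqrt) simp_all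
        moreover have "Q \<le> q" unfolding q_def using SQ D Ppos[OF True] by (intro sq_le_of_sqrt) simp_all
        ultimately show False using PQ pq by linarith
      next
        case False
        then show False using pq_big pq by linarith
      qed
    qed
  qed
  have le: "p + q \<le> 2 * a \<longleftrightarrow> D \<ge> 0"
  proof
    assume D: "D \<ge> 0"
    then have ua: "\<bar>u\<bar> \<le> a" using usq' abs_le_square_iff[of u a] a0 by simp
    have "p \<le> P" unfolding p_def using SP D Pnn[OF ua] by (intro sqrt_le_of_sq) simp_all
    moreover have "q \<le> Q" unfolding q_def using SQ D Pnn[OF ua] by (intro sqrt_le_of_sq) simp_all
    ultimately show "p + q \<le> 2 * a" using PQ by linarith
  next
    assume pq: "p + q \<le> 2 * a"
    show "D \<ge> 0"
    proof (rule ccontr)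
      assume "\<not> D \<ge> 0"
      then have D: "D < 0" by simp
      show False
      proof (cases "\<bar>u\<bar> \<le> a")
        case True
        have "P < p" unfolding p_def using SP D Pnn[OF True] by (intro sq_lt_of_sqrt) simp_all
        moreover have "Q < q" unfolding q_def using SQ D Pnn[OF True] by (intro sq_lt_of_sqrt) simp_all
        ultimately show False using PQ pq by linarith
      next
        case False
        then show False using pq_big pq by linarith
      qed
    qed
  qed
  show "sqrt ((u+c)\<^sup>2+v\<^sup>2) + sqrt ((u-c)\<^sup>2+v\<^sup>2) < 2*a \<longleftrightarrow> b\<^sup>2 * u\<^sup>2 + a\<^sup>2 * v\<^sup>2 < a\<^sup>2 * b\<^sup>2"
    using lt unfolding p_def q_def D_def by linarith
  show "sqrt ((u+c)\<^sup>2+v\<^sup>2) + sqrt ((u-c)\<^sup>2+v\<^sup>2) \<le> 2*a \<longleftrightarrow> b\<^sup>2 * u\<^sup>2 + a\<^sup>2 * v\<^sup>2 \<le> a\<^sup>2 * b\<^sup>2"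
    using le unfolding p_def q_def D_def by linarith
qed


definition cpx :: "real \<times> real \<Rightarrow> complex" where "cpx p = Complex (fst p) (snd p)"

lemma cpx_meas: "cpx \<in> borel_measurable borel"
proof -
  have e: "cpx = (\<lambda>p. complex_of_real (fst p) + \<i> * complex_of_real (snd p))"
    by (auto simp: cpx_def fun_eq_iff complex_eq_iff)
  show ?thesis unfolding e
    by (intro borel_measurable_continuous_onI continuous_intros)
qed

lemma lborel_cpx: "lborel = distr (lborel :: (real \<times> real) measure) borel cpx"
proof (rule lborel_eqI)
  fix l u :: complex
  assume le: "\<And>b. b \<in> Basis \<Longrightarrow> l \<bullet> b \<le> u \<bullet> b"
  then have le1: "Re l \<le> Re u" and le2: "Im l \<le> Im u"
    using le[of 1] le[of \<i>] by (auto simp: Basis_complex_def)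
  have pre: "cpx -` box l u = box (Re l, Im l) (Re u, Im u)"
    by (auto simp: cpx_def in_box_complex_iff box_prod)
  have "emeasure (distr lborel borel cpx) (box l u) = emeasure lborel (box (Re l, Im l) (Re u, Im u))"
    by (simp add: emeasure_distr cpx_meas pre)
  also have "\<dots> = ennreal ((Re u - Re l) * (Im u - Im l))"
    using le1 le2 by (subst emeasure_lborel_box) (auto simp: Basis_prod_def inner_prod_def)
  also have "\<dots> = (\<Prod>b\<in>Basis. (u - l) \<bullet> b)"
    by (simp add: Basis_complex_def)
  finally show "emeasure (distr lborel borel cpx) (box l u) = (\<Prod>b\<in>Basis. (u - l) \<bullet> b)" .
qed simp

lemma emeasure_cpx:
  assumes "S \<in> sets borel"
  shows "emeasure lborel S = emeasure lborel (cpx -` S)"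
  by (subst lborel_cpx) (simp add: emeasure_distr cpx_meas assms)

lemma emeasure_translate_complex:
  fixes m :: complex
  assumes "S \<in> sets borel"
  shows "emeasure lborel ((\<lambda>z. m + z) -` S) = emeasure lborel S"
proof -
  have "emeasure lborel S = emeasure (distr lborel borel ((+) m)) S"
    by (simp add: lborel_distr_plus)
  also have "\<dots> = emeasure lborel ((+) m -` S)"
    by (simp add: emeasure_distr assms)
  finally show ?thesis by simp
qed

lemma emeasure_shear:
  fixes t :: real
  assumes X: "X \<in> sets borel"
  shows "emeasure lborel ((\<lambda>(x,y). (x, y + t * x)) -` X) = emeasure (lborel :: (real\<times>real) measure) X"
proof -
  let ?s = "\<lambda>(x::real, y::real). (x, y + t * x)"
  have sm: "?s \<in> borel_measurable borel"
    by (intro borel_measurable_continuous_onI) (simp add: case_prod_beta' continuous_intros)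
  have X': "?s -` X \<in> sets borel" using sm X by (simp add: measurable_sets_borel)
  have sl: "Pair x -` (?s -` X) = (+) (t * x) -` (Pair x -` X)" for x
    by (auto simp: add.commute)
  have Xs: "Pair x -` X \<in> sets borel" for x
  proof -
    have "(\<lambda>y. (x, y)) \<in> borel_measurable (borel :: real measure)"
      by (intro borel_measurable_continuous_onI continuous_intros)
    from measurable_sets_borel[OF this X] show ?thesis by simp
  qed
  have "emeasure lborel (?s -` X) = emeasure (lborel \<Otimes>\<^sub>M lborel) (?s -` X)"
    by (simp add: lborel_prod)
  also have "\<dots> = (\<integral>\<^sup>+ x. emeasure lborel (Pair x -` (?s -` X)) \<partial>lborel)"
    using X' by (intro lborel.emeasure_pair_measure_alt) (unfold lborel_prod, simp)
  also have "\<dots> = (\<integral>\<^sup>+ x. emeasure lborel (Pair x -` X) \<partial>lborel)"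
  proof (rule nn_integral_cong)
    fix x :: real
    have "emeasure lborel (Pair x -` X) = emeasure (distr lborel borel ((+) (t * x))) (Pair x -` X)"
      by (simp add: lborel_distr_plus)
    also have "\<dots> = emeasure lborel ((+) (t * x) -` (Pair x -` X))"
      by (simp add: emeasure_distr Xs)
    finally show "emeasure lborel (Pair x -` (?s -` X)) = emeasure lborel (Pair x -` X)"
      by (simp add: sl)
  qed
  also have "\<dots> = emeasure (lborel \<Otimes>\<^sub>M lborel) X"
    using X by (intro lborel.emeasure_pair_measure_alt[symmetric]) (unfold lborel_prod, simp)
  also have "\<dots> = emeasure lborel X" by (simp add: lborel_prod)
  finally show ?thesis .
qed

lemma emeasure_axis_ellipse:
  fixes al be :: real
  assumes al: "al > 0" and be: "be > 0"
  shows "emeasure lborel {(x,y). (x/al)\<^sup>2 + (y/be)\<^sup>2 < (1::real)} = ennreal (pi * al * be)"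
proof -
  define c :: "real \<times> real \<Rightarrow> real" where "c j = (if j = (1,0) then 1/al else 1/be)" for j
  define T where "T x = (0::real\<times>real) + (\<Sum>j\<in>Basis. (c j * (x \<bullet> j)) *\<^sub>R j)" for x
  have cnz: "\<And>j. j \<in> Basis \<Longrightarrow> c j \<noteq> 0" using al be by (auto simp: c_def)
  have L: "lborel = density (distr lborel borel T) (\<lambda>_. (\<Prod>j\<in>Basis. \<bar>c j\<bar>))"
    unfolding T_def by (rule lborel_affine_euclidean[OF cnz])
  have Teq: "T (x, y) = (x / al, y / be)" for x y
    by (simp add: T_def c_def Basis_prod_def)
  have prodc: "(\<Prod>j\<in>Basis. \<bar>c j\<bar>) = 1 / (al * be)"
    using al be by (simp add: c_def Basis_prod_def)
  have Tm: "T \<in> borel_measurable borel"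
  proof -
    have e: "T = (\<lambda>p. (fst p / al, snd p / be))" using Teq by (auto simp: fun_eq_iff)
    show ?thesis unfolding e using al be by (intro borel_measurable_continuous_onI continuous_intros) auto
  qed
  have pre: "T -` ball 0 1 = {(x,y). (x/al)\<^sup>2 + (y/be)\<^sup>2 < (1::real)}"
  proof -
    have "p \<in> T -` ball 0 1 \<longleftrightarrow> p \<in> {(x,y). (x/al)\<^sup>2 + (y/be)\<^sup>2 < (1::real)}" for p
      by (cases p) (simp add: Teq dist_norm norm_Pair power_divide)
    then show ?thesis by blast
  qed
  have "ennreal pi = emeasure lborel (ball (0::real\<times>real) 1)"
    by (simp add: emeasure_ball unit_ball_vol_2)
  also have "\<dots> = emeasure (density (distr lborel borel T) (\<lambda>_. ennreal (1 / (al * be)))) (ball 0 1)"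
    by (subst L) (simp add: prodc)
  also have "\<dots> = ennreal (1 / (al * be)) * emeasure lborel (T -` ball 0 1)"
    by (simp add: emeasure_density nn_integral_cmult_indicator emeasure_distr Tm)
  finally have eq: "ennreal pi = ennreal (1 / (al * be)) * emeasure lborel {(x,y). (x/al)\<^sup>2 + (y/be)\<^sup>2 < (1::real)}"
    unfolding pre .
  have "ennreal (pi * al * be) = ennreal (al * be) * ennreal pi"
    using al be by (simp add: ennreal_mult'[symmetric] mult_ac)
  also have "\<dots> = (ennreal (al * be) * ennreal (1 / (al * be))) * emeasure lborel {(x,y). (x/al)\<^sup>2 + (y/be)\<^sup>2 < (1::real)}"
    unfolding eq by (simp add: mult.assoc)
  also have "ennreal (al * be) * ennreal (1 / (al * be)) = 1"
    using al be by (simp add: ennreal_mult'[symmetric])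
  finally show ?thesis by simp
qed


lemma ellipse_area:
  fixes p q a b :: real and m :: complex
  assumes pq: "p\<^sup>2 + q\<^sup>2 = 1" and a: "a > 0" and b: "b > 0"
  shows "emeasure lborel {z. b\<^sup>2 * (p * Re (z - m) + q * Im (z - m))\<^sup>2 + a\<^sup>2 * (p * Im (z - m) - q * Re (z - m))\<^sup>2 < a\<^sup>2 * b\<^sup>2}
         = ennreal (pi * a * b)"
proof -
  define Q where "Q x y = b\<^sup>2 * (p * x + q * y)\<^sup>2 + a\<^sup>2 * (p * y - q * x)\<^sup>2" for x y :: real
  define S where "S = {z. Q (Re (z - m)) (Im (z - m)) < a\<^sup>2 * b\<^sup>2}"
  define S0 where "S0 = {w. Q (Re w) (Im w) < a\<^sup>2 * b\<^sup>2}"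
  define F2 where "F2 = {u :: real \<times> real. Q (fst u) (snd u) < a\<^sup>2 * b\<^sup>2}"
  define g where "g = b\<^sup>2 * q\<^sup>2 + a\<^sup>2 * p\<^sup>2"
  define be where "be = p * q * (b\<^sup>2 - a\<^sup>2)"
  define al1 where "al1 = sqrt g"
  define be1 where "be1 = a * b / sqrt g"
  define G where "G = {(x,y). (x/al1)\<^sup>2 + (y/be1)\<^sup>2 < (1::real)}"
  define sh where "sh = (\<lambda>(x::real, y::real). (x, y + (be / g) * x))"
  have g0: "g > 0"
  proof (cases "p = 0")
    case True
    then have "q\<^sup>2 = 1" using pq by simp
    then show ?thesis using b by (simp add: g_def True)
  next
    case False
    then have "a\<^sup>2 * p\<^sup>2 > 0" using a by simp
    moreover have "b\<^sup>2 * q\<^sup>2 \<ge> 0" by simp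
    ultimately show ?thesis unfolding g_def by linarith
  qed
  have QS: "S = {z. b\<^sup>2 * (p * Re (z - m) + q * Im (z - m))\<^sup>2 + a\<^sup>2 * (p * Im (z - m) - q * Re (z - m))\<^sup>2 < a\<^sup>2 * b\<^sup>2}"
    by (simp add: S_def Q_def)
  have contQ: "continuous_on UNIV (\<lambda>u. Q (f u) (h u))" if "continuous_on UNIV f" "continuous_on UNIV h" for f h :: "'x::topological_space \<Rightarrow> real"
    unfolding Q_def by (intro continuous_intros that)
  have Sb: "S \<in> sets borel"
    unfolding S_def by (intro borel_open open_Collect_less contQ continuous_intros)
  have S0b: "S0 \<in> sets borel"
    unfolding S0_def by (intro borel_open open_Collect_less contQ continuous_intros)
  have Gb: "G \<in> sets borel"
  proof -
    have e: "G = {u. (fst u/al1)\<^sup>2 + (snd u/be1)\<^sup>2 < (1::real)}" by (auto simp: G_def)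
    have "al1 > 0" "be1 > 0" using g0 a b by (simp_all add: al1_def be1_def)
    then show ?thesis unfolding e by (intro borel_open open_Collect_less continuous_intros) auto
  qed
  have "emeasure lborel S = emeasure lborel ((\<lambda>z. m + z) -` S)"
    by (rule emeasure_translate_complex[OF Sb, symmetric])
  also have "(\<lambda>z. m + z) -` S = S0" by (simp add: S_def S0_def)
  also have "emeasure lborel S0 = emeasure lborel (cpx -` S0)" by (rule emeasure_cpx[OF S0b])
  also have "cpx -` S0 = F2" by (auto simp: S0_def F2_def cpx_def)
  also have "F2 = sh -` G"
  proof -
    have key: "g * Q x y = a\<^sup>2 * b\<^sup>2 * x\<^sup>2 + (g * y + be * x)\<^sup>2" for x y
    proof -
      have "g * Q x y - (a\<^sup>2 * b\<^sup>2 * x\<^sup>2 + (g * y + be * x)\<^sup>2) = a\<^sup>2 * b\<^sup>2 * x\<^sup>2 * ((p\<^sup>2 + q\<^sup>2)\<^sup>2 - 1)"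
        unfolding g_def be_def Q_def by algebra
      then show ?thesis using pq by simp
    qed
    have al2: "al1\<^sup>2 = g" using g0 by (simp add: al1_def)
    have be2: "be1\<^sup>2 = a\<^sup>2 * b\<^sup>2 / g" using g0 by (simp add: be1_def power_divide power_mult_distrib)
    have eqv: "(x/al1)\<^sup>2 + ((y + (be / g) * x)/be1)\<^sup>2 = Q x y / (a\<^sup>2 * b\<^sup>2)" for x y
    proof -
      have s1: "(x/al1)\<^sup>2 = x\<^sup>2 / g" by (simp add: power_divide al2)
      have yy: "y + (be / g) * x = (g * y + be * x) / g" using g0 by (simp add: field_simps)
      have aux: "(X / g)\<^sup>2 / (c / g) = X\<^sup>2 / (g * c)" if "c \<noteq> 0" for X c :: real
        using g0 that by (simp add: field_simps power2_eq_square)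
      have s2: "((y + (be / g) * x)/be1)\<^sup>2 = (g * y + be * x)\<^sup>2 / (g * (a\<^sup>2 * b\<^sup>2))"
      proof -
        have "((y + (be / g) * x)/be1)\<^sup>2 = ((g * y + be * x) / g)\<^sup>2 / (a\<^sup>2 * b\<^sup>2 / g)"
          unfolding yy power_divide[of _ be1] be2 ..
        also have "\<dots> = (g * y + be * x)\<^sup>2 / (g * (a\<^sup>2 * b\<^sup>2))"
          by (rule aux) (use a b in simp)
        finally show ?thesis .
      qed
      have "(x/al1)\<^sup>2 + ((y + (be / g) * x)/be1)\<^sup>2 = x\<^sup>2 / g + (g * y + be * x)\<^sup>2 / (g * (a\<^sup>2 * b\<^sup>2))"
        unfolding s1 s2 ..
      also have "\<dots> = (a\<^sup>2 * b\<^sup>2 * x\<^sup>2 + (g * y + be * x)\<^sup>2) / (g * (a\<^sup>2 * b\<^sup>2))"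
        using g0 a b by (simp add: field_simps)
      also have "\<dots> = Q x y / (a\<^sup>2 * b\<^sup>2)"
        unfolding key[symmetric] using g0 by simp
      finally show ?thesis .
    qed
    have "u \<in> F2 \<longleftrightarrow> u \<in> sh -` G" for u
    proof (cases u)
      case (Pair x y)
      have "Q x y < a\<^sup>2 * b\<^sup>2 \<longleftrightarrow> Q x y / (a\<^sup>2 * b\<^sup>2) < 1" using a b by (simp add: divide_less_eq)
      then show ?thesis using eqv[of x y] by (simp add: Pair F2_def G_def sh_def)
    qed
    then show ?thesis by blast
  qed
  also have "emeasure lborel (sh -` G) = emeasure lborel G"
    unfolding sh_def by (rule emeasure_shear[OF Gb])
  also have "\<dots> = ennreal (pi * al1 * be1)"
    unfolding G_def using g0 a b by (intro emeasure_axis_ellipse) (simp_all add: al1_def be1_def)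
  also have "pi * al1 * be1 = pi * a * b" using g0 by (simp add: al1_def be1_def)
  finally show ?thesis unfolding QS .
qed


declare scaleC_one[simp]

lemma TH_core:
  fixes A :: "'a::complex_inner_space \<Rightarrow> 'a"
  assumes addA: "\<And>u v. A (u + v) = A u + A v"
    and homA: "\<And>c u. A (scaleC c u) = scaleC c (A u)"
    and x1: "norm x = 1" and y1: "norm y = 1"
    and dne: "cinner (A y) y \<noteq> cinner (A x) x"
    and t: "0 \<le> t" "t \<le> 1"
  shows "\<exists>w. norm w = 1 \<and> cinner (A w) w = cinner (A x) x + of_real t * (cinner (A y) y - cinner (A x) x)"
proof -
  define z1 where "z1 = cinner (A x) x"
  define d where "d = cinner (A y) y - z1"
  have d0: "d \<noteq> 0" using dne by (simp add: d_def z1_def)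
  define s where "s u v = (cinner (A u) v - z1 * cinner u v) / d" for u v
  have s_addl: "s (u + v) w = s u w + s v w" for u v w
    unfolding s_def addA cinner_add_left add_divide_distrib[symmetric] by (simp add: algebra_simps)
  have s_addr: "s u (v + w) = s u v + s u w" for u v w
    unfolding s_def cinner_add_right add_divide_distrib[symmetric] by (simp add: algebra_simps)
  have s_scl: "s (scaleC c u) v = c * s u v" for c u v
    by (simp add: s_def homA cinner_scaleC_left algebra_simps)
  have s_scr: "s u (scaleC c v) = cnj c * s u v" for c u v
    by (simp add: s_def cinner_scaleC_right algebra_simps)
  have cxx: "cinner x x = 1" using x1 by (simp add: cinner_self_norm)
  have cyy: "cinner y y = 1" using y1 by (simp add: cinner_self_norm)
  have sxx: "s x x = 0" by (simp add: s_def cxx z1_def)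
  have syy: "s y y = 1" using d0 by (simp add: s_def cyy d_def)
  define P where "P = s x y"
  define R where "R = s y x"
  define mu where "mu = (if P = cnj R then 1 else cnj (P - cnj R) / of_real (cmod (P - cnj R)))"
  have cmc: "cmod (cnj P - R) = cmod (P - cnj R)" by (metis complex_cnj_cnj complex_cnj_diff complex_mod_cnj)
  have mu1: "cmod mu = 1" by (simp add: mu_def norm_divide cmc)
  have muc: "mu * cnj mu = 1"
    using mu1 by (metis complex_norm_square of_real_1 power_one)
  have muIm: "Im (mu * (P - cnj R)) = 0"
  proof (cases "P = cnj R")
    case False
    define Z where "Z = P - cnj R"
    have mZ: "mu = cnj Z / of_real (cmod Z)" using False by (simp add: mu_def Z_def)
    have "cnj Z * Z = of_real ((cmod Z)\<^sup>2)" using complex_norm_square[of Z] by (simp add: mult.commute)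
    then have "mu * (P - cnj R) = of_real ((cmod (P - cnj R))\<^sup>2) / of_real (cmod (P - cnj R))"
      unfolding Z_def[symmetric] mZ by simp
    then show ?thesis by (simp add: Im_divide_of_real)
  qed (simp add: mu_def)
  define x' where "x' = scaleC mu x"
  have x'1: "norm x' = 1" by (simp add: x'_def norm_scaleC mu1 x1)
  have sx'x': "s x' x' = 0" by (simp add: x'_def s_scl s_scr sxx)
  define c0 where "c0 = s x' y + s y x'"
  have c0Im: "Im c0 = 0"
  proof -
    have "c0 = mu * P + cnj mu * R" by (simp add: c0_def x'_def s_scl s_scr P_def R_def)
    then have "Im c0 = Im (mu * P) + Im (cnj mu * R)" by simp
    also have "Im (cnj mu * R) = - Im (mu * cnj R)"
      by (simp add: algebra_simps)
    finally show ?thesis using muIm by (simp add: right_diff_distrib)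
  qed
  define e where "e = Re (cinner x' y)"
  define v where "v r = scaleC (of_real (1 - r)) x' + scaleC (of_real r) y" for r :: real
  have svv: "s (v r) (v r) = of_real (r * (1 - r) * Re c0 + r\<^sup>2)" for r
  proof -
    have "s (v r) (v r) = of_real (1 - r) * of_real r * c0 + of_real r * of_real r"
      by (simp add: v_def s_addl s_addr s_scl s_scr sx'x' syy c0_def algebra_simps)
    also have "\<dots> = of_real (r * (1 - r) * Re c0 + r\<^sup>2)"
      using c0Im by (simp add: complex_eq_iff power2_eq_square)
    finally show ?thesis .
  qed
  have nvv: "(norm (v r))\<^sup>2 = (1 - r)\<^sup>2 + r\<^sup>2 + 2 * r * (1 - r) * e" for r
  proof -
    have "cinner x' x' = 1" using x'1 by (simp add: cinner_self_norm)
    then have ce: "cinner (v r) (v r) = of_real ((1 - r)\<^sup>2) + of_real (r\<^sup>2) + of_real ((1 - r) * r) * (cinner x' y + cinner y x')"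
      by (simp add: v_def cinner_add_left cinner_add_right cinner_scaleC_left cinner_scaleC_right cyy
          power2_eq_square algebra_simps)
    have ey: "Re (cinner y x') = e" unfolding e_def by (subst cinner_commute) simp
    have "Re (cinner (v r) (v r)) = (1 - r)\<^sup>2 + r\<^sup>2 + ((1 - r) * r) * (Re (cinner x' y) + Re (cinner y x'))"
      unfolding ce by (simp add: algebra_simps)
    then have "Re (cinner (v r) (v r)) = (1 - r)\<^sup>2 + r\<^sup>2 + 2 * r * (1 - r) * e"
      unfolding ey e_def[symmetric] by (simp add: algebra_simps)
    then show ?thesis by (simp add: cinner_self_Re)
  qed
  have vnz: "v r \<noteq> 0" if r: "0 \<le> r" "r \<le> 1" for r
  proof
    assume v0: "v r = 0"
    show False
    proof (cases "r = 0")
      case True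
      then have "v r = x'" by (simp add: v_def)
      then show False using v0 x'1 by simp
    next
      case False
      then have "scaleC (of_real r) y = - scaleC (of_real (1 - r)) x'"
        using v0 unfolding v_def by (simp add: eq_neg_iff_add_eq_0 add.commute)
      then have "scaleC (of_real (1/r)) (scaleC (of_real r) y) = scaleC (of_real (1/r)) (- scaleC (of_real (1 - r)) x')"
        by simp
      then have yeq: "y = scaleC (- of_real ((1 - r) / r)) x'"
        using False by (simp add: scaleC_scaleC scaleC_one scaleC_minus_right scaleC_minus_left)
      have "s y y = 0" unfolding yeq by (simp add: s_scl s_scr sx'x')
      then show False using syy by simp
    qed
  qed
  define D where "D r = (1 - r)\<^sup>2 + r\<^sup>2 + 2 * r * (1 - r) * e" for r :: real
  have Dpos: "D r > 0" if "0 \<le> r" "r \<le> 1" for r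
    using vnz[OF that] nvv[of r] unfolding D_def by (metis zero_less_norm_iff zero_less_power)
  define f where "f r = (r * (1 - r) * Re c0 + r\<^sup>2) / D r" for r
  have Dc: "continuous_on {0..1} D" unfolding D_def by (intro continuous_intros)
  have Dn: "\<forall>r\<in>{0..1}. D r \<noteq> 0" using Dpos by force
  have fc: "continuous_on {0..1} f"
    unfolding f_def by (intro continuous_on_divide continuous_intros Dc Dn)
  have f0: "f 0 = 0" by (simp add: f_def)
  have f1: "f 1 = 1" by (simp add: f_def D_def)
  obtain r where r: "0 \<le> r" "r \<le> 1" "f r = t"
    using IVT'[of f 0 t 1] fc t f0 f1 by auto
  define w where "w = scaleR (1 / norm (v r)) (v r)"
  have nv: "norm (v r) > 0" using vnz[OF r(1,2)] by simp
  have w1: "norm w = 1" using nv by (simp add: w_def)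
  have sww: "s w w = of_real t"
  proof -
    have "s w w = of_real (1 / norm (v r)) * of_real (1 / norm (v r)) * s (v r) (v r)"
      by (simp add: w_def s_scl s_scr flip: scaleC_of_real)
    also have "\<dots> = of_real ((r * (1 - r) * Re c0 + r\<^sup>2) / (norm (v r))\<^sup>2)"
      by (simp add: svv power2_eq_square)
    also have "\<dots> = of_real t" using r(3) by (simp add: f_def D_def nvv)
    finally show ?thesis .
  qed
  have cww: "cinner w w = 1" using w1 by (simp add: cinner_self_norm)
  have "cinner (A w) w = z1 * cinner w w + d * s w w"
    using d0 by (simp add: s_def)
  then have "cinner (A w) w = z1 + of_real t * d" by (simp add: cww sww mult.commute)
  then show ?thesis using w1 unfolding z1_def d_def by blast
qed

lemma numrange_convex:
  fixes A :: "'a::complex_inner_space \<Rightarrow> 'a"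
  assumes "clinear A"
  shows "convex (numerical_range A)"
proof (unfold convex_alt, intro ballI allI impI)
  have addA: "\<And>u v. A (u + v) = A u + A v" and homA: "\<And>c u. A (scaleC c u) = scaleC c (A u)"
    using assms by (auto simp: clinear_def)
  fix z1 z2 and u :: real
  assume z1: "z1 \<in> numerical_range A" and z2: "z2 \<in> numerical_range A" and u: "0 \<le> u \<and> u \<le> 1"
  obtain x where x: "norm x = 1" "z1 = cinner (A x) x" using z1 by (auto simp: numerical_range_def)
  obtain y where y: "norm y = 1" "z2 = cinner (A y) y" using z2 by (auto simp: numerical_range_def)
  have eq: "(1 - u) *\<^sub>R z1 + u *\<^sub>R z2 = z1 + of_real u * (z2 - z1)"
    by (simp add: scaleR_conv_of_real algebra_simps)
  show "(1 - u) *\<^sub>R z1 + u *\<^sub>R z2 \<in> numerical_range A"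
  proof (cases "z1 = z2")
    case True
    then show ?thesis using z1 by (simp add: eq)
  next
    case False
    obtain w where "norm w = 1" "cinner (A w) w = z1 + of_real u * (z2 - z1)"
      using TH_core[OF addA homA x(1) y(1), of u] False u x y by auto
    then have "\<exists>x. z1 + of_real u * (z2 - z1) = cinner (A x) x \<and> norm x = 1" by metis
    then show ?thesis unfolding eq numerical_range_def by simp
  qed
qed


lemma cinner_scaleC_unit: "cmod k = 1 \<Longrightarrow> cinner (scaleC k u) (scaleC k v) = cinner u (v::'a::complex_inner_space)"
proof -
  assume k: "cmod k = 1"
  have "k * cnj k = 1" using k by (metis complex_norm_square of_real_1 power_one)
  then show ?thesis by (simp add: cinner_scaleC_left cinner_scaleC_right mult.assoc[symmetric]) (simp add: mult.commute)
qed

theorem proposition5: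
  fixes A Astar :: "'a::{complex_inner_space, complete_space} \<Rightarrow> 'a"
  assumes "bounded_clinear A"
    and "is_adjoint A Astar"
    and "elliptical (numerical_range A)"
  shows "onorm (\<lambda>x. Astar (A x) - A (Astar x))
           \<le> 4 / pi * measure lebesgue (numerical_range A)"
proof -
  define W where "W = numerical_range A"
  have clin: "clinear A" using assms(1) by (simp add: bounded_clinear_def)
  have addA: "\<And>u v. A (u + v) = A u + A v" and homA: "\<And>c u. A (scaleC c u) = scaleC c (A u)"
    using clin by (auto simp: clinear_def)
  have adj1: "cinner (A u) v = cinner u (Astar v)" for u v
    using assms(2) by (simp add: is_adjoint_def)
  have adj2: "cinner (Astar u) v = cinner u (A v)" for u v
    by (metis adj1 cinner_commute)
  have addS: "Astar (u + v) = Astar u + Astar v" for u v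
  proof -
    have "cinner (Astar (u + v) - (Astar u + Astar v)) x = 0" for x
      by (simp add: cinner_diff_left cinner_add_left adj2 addA cinner_add_right)
    then show ?thesis using cinner_eq_zeroI by fastforce
  qed
  obtain f1 f2 a where ell: "cmod (f1 - f2) < 2 * a" "closure W = elliptical_disc f1 f2 a"
    using assms(3) unfolding elliptical_def W_def by blast
  define d where "d = f2 - f1"
  define c where "c = cmod d / 2"
  define om where "om = (if d = 0 then 1 else d / of_real (cmod d))"
  define m where "m = (f1 + f2) / 2"
  define b where "b = sqrt (a\<^sup>2 - c\<^sup>2)"
  have c0: "c \<ge> 0" by (simp add: c_def)
  have ca: "c < a" using ell(1) by (simp add: c_def d_def norm_minus_commute)
  have a0: "a > 0" using c0 ca by linarith
  have b2: "b\<^sup>2 = a\<^sup>2 - c\<^sup>2"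
  proof -
    have "c\<^sup>2 < a\<^sup>2" using c0 ca by (simp add: power_strict_mono)
    then show ?thesis by (simp add: b_def)
  qed
  have b0: "b > 0"
  proof -
    have "c\<^sup>2 < a\<^sup>2" using c0 ca by (simp add: power_strict_mono)
    then show ?thesis by (simp add: b_def)
  qed
  have om1: "cmod om = 1" by (simp add: om_def norm_divide)
  have omc: "om * cnj om = 1" using om1 by (metis complex_norm_square of_real_1 power_one)
  have omd: "om * of_real c = d / 2"
    by (cases "d = 0") (simp_all add: om_def c_def)
  have coords: "cmod (z - f1) = sqrt ((Re (cnj om * (z - m)) + c)\<^sup>2 + (Im (cnj om * (z - m)))\<^sup>2)"
     "cmod (z - f2) = sqrt ((Re (cnj om * (z - m)) - c)\<^sup>2 + (Im (cnj om * (z - m)))\<^sup>2)" for z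
  proof -
    define w where "w = cnj om * (z - m)"
    have zm: "z - m = om * w" unfolding w_def using omc by (simp add: mult.assoc[symmetric])
    have "z - f1 = (z - m) + om * of_real c" unfolding omd by (simp add: m_def d_def field_simps)
    also have "\<dots> = om * (w + of_real c)" by (simp add: zm distrib_left)
    finally have e1: "cmod (z - f1) = cmod (w + of_real c)" by (simp add: norm_mult om1)
    have "z - f2 = (z - m) - om * of_real c" unfolding omd by (simp add: m_def d_def field_simps)
    also have "\<dots> = om * (w - of_real c)" by (simp add: zm right_diff_distrib)
    finally have e2: "cmod (z - f2) = cmod (w - of_real c)" by (simp add: norm_mult om1)
    show "cmod (z - f1) = sqrt ((Re w + c)\<^sup>2 + (Im w)\<^sup>2)" unfolding e1 by (simp add: cmod_def)
    show "cmod (z - f2) = sqrt ((Re w - c)\<^sup>2 + (Im w)\<^sup>2)" unfolding e2 by (simp add: cmod_def)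
  qed
  have Wbd: "\<bar>Re (cnj om * (z - m))\<bar> \<le> a \<and> \<bar>Im (cnj om * (z - m))\<bar> \<le> b" if "z \<in> W" for z
  proof -
    define u where "u = Re (cnj om * (z - m))"
    define v where "v = Im (cnj om * (z - m))"
    have "z \<in> closure W" using that closure_subset by blast
    then have "cmod (z - f1) + cmod (z - f2) \<le> 2 * a" using ell(2) by (simp add: elliptical_disc_def)
    then have h: "b\<^sup>2 * u\<^sup>2 + a\<^sup>2 * v\<^sup>2 \<le> a\<^sup>2 * b\<^sup>2"
      using ell_core(2)[OF c0 ca b2, of u v] by (simp add: coords u_def v_def)
    have nn: "0 \<le> a\<^sup>2 * v\<^sup>2" "0 \<le> b\<^sup>2 * u\<^sup>2" by simp_all
    have "b\<^sup>2 * u\<^sup>2 \<le> b\<^sup>2 * a\<^sup>2" "a\<^sup>2 * v\<^sup>2 \<le> a\<^sup>2 * b\<^sup>2"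
      using h nn mult.commute[of "a\<^sup>2" "b\<^sup>2"] by linarith+
    then have "u\<^sup>2 \<le> a\<^sup>2" "v\<^sup>2 \<le> b\<^sup>2" using a0 b0 by simp_all
    then show ?thesis unfolding u_def[symmetric] v_def[symmetric]
      using a0 b0 abs_le_square_iff[of u a] abs_le_square_iff[of v b] by simp
  qed
  define B where "B x = scaleC (cnj om) (A x - scaleC m x)" for x
  define Bs where "Bs x = scaleC om (Astar x - scaleC (cnj m) x)" for x
  have addB: "B (x + y) = B x + B y" for x y
    by (simp add: B_def addA scaleC_add_right scaleC_diff_right algebra_simps)
  have addBs: "Bs (x + y) = Bs x + Bs y" for x y
    by (simp add: Bs_def addS scaleC_add_right scaleC_diff_right algebra_simps)
  have adjB: "cinner (B x) y = cinner x (Bs y)" for x y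
    by (simp add: B_def Bs_def cinner_scaleC_left cinner_scaleC_right cinner_diff_left cinner_diff_right adj1)
  have Bform: "\<exists>z\<in>W. cinner (B x) x = of_real ((norm x)\<^sup>2) * (cnj om * (z - m))" for x
  proof (cases "x = 0")
    case True
    have "f1 \<in> closure W" using ell by (simp add: elliptical_disc_def)
    then obtain z where "z \<in> W" by (metis closure_empty empty_iff ex_in_conv)
    then show ?thesis using True by (auto simp: B_def)
  next
    case False
    define x1 where "x1 = scaleR (1 / norm x) x"
    have n1: "norm x1 = 1" using False by (simp add: x1_def)
    have xx: "x = scaleR (norm x) x1" using False by (simp add: x1_def)
    have Ax: "A x = scaleR (norm x) (A x1)" using xx homA by (metis scaleC_of_real)
    have "cinner (A x) x = of_real ((norm x)\<^sup>2) * cinner (A x1) x1"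
      by (subst Ax, subst (2) xx) (simp add: cinner_scaleR_left cinner_scaleR_right power2_eq_square)
    moreover have "cinner x x = of_real ((norm x)\<^sup>2)" by (simp add: cinner_self_norm)
    ultimately have "cinner (B x) x = of_real ((norm x)\<^sup>2) * (cnj om * (cinner (A x1) x1 - m))"
      by (simp add: B_def cinner_scaleC_left cinner_diff_left algebra_simps)
    moreover have "cinner (A x1) x1 \<in> W" using n1 by (auto simp: W_def numerical_range_def)
    ultimately show ?thesis by blast
  qed
  have reB: "\<bar>Re (cinner (B x) x)\<bar> \<le> a * (norm x)\<^sup>2" for x
  proof -
    obtain z where z: "z \<in> W" "cinner (B x) x = of_real ((norm x)\<^sup>2) * (cnj om * (z - m))" using Bform by blast
    have "\<bar>Re (cinner (B x) x)\<bar> = (norm x)\<^sup>2 * \<bar>Re (cnj om * (z - m))\<bar>" by (simp add: z(2) abs_mult)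
    also have "\<dots> \<le> (norm x)\<^sup>2 * a" using Wbd[OF z(1)] by (intro mult_left_mono) simp_all
    finally show ?thesis by (simp add: mult.commute)
  qed
  have imB: "\<bar>Im (cinner (B x) x)\<bar> \<le> b * (norm x)\<^sup>2" for x
  proof -
    obtain z where z: "z \<in> W" "cinner (B x) x = of_real ((norm x)\<^sup>2) * (cnj om * (z - m))" using Bform by blast
    have "\<bar>Im (cinner (B x) x)\<bar> = (norm x)\<^sup>2 * \<bar>Im (cnj om * (z - m))\<bar>" by (simp add: z(2) abs_mult)
    also have "\<dots> \<le> (norm x)\<^sup>2 * b" using Wbd[OF z(1)] by (intro mult_left_mono) simp_all
    finally show ?thesis by (simp add: mult.commute)
  qed
  have cb: "cmod (cinner (B x) (B y) - cinner (Bs x) (Bs y)) \<le> 4 * a * b * norm x * norm y" for x y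
    by (rule comm_bound[OF addB addBs adjB reB imB])
  have omc1: "cmod (cnj om) = 1" using om1 by simp
  have ident: "cinner (B x) (B y) - cinner (Bs x) (Bs y) = cinner (Astar (A x) - A (Astar x)) y" for x y
  proof -
    have "cinner (B x) (B y) - cinner (Bs x) (Bs y)
        = cinner (A x - scaleC m x) (A y - scaleC m y) - cinner (Astar x - scaleC (cnj m) x) (Astar y - scaleC (cnj m) y)"
      unfolding B_def Bs_def by (simp add: cinner_scaleC_unit om1 omc1)
    also have "\<dots> = cinner (Astar (A x) - A (Astar x)) y"
      by (simp add: cinner_diff_left cinner_diff_right cinner_scaleC_left cinner_scaleC_right adj1 adj2 algebra_simps)
    finally show ?thesis .
  qed
  have opb: "norm (Astar (A x) - A (Astar x)) \<le> (4 * a * b) * norm x" for x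
  proof -
    define C where "C = Astar (A x) - A (Astar x)"
    have "(norm C)\<^sup>2 = Re (cinner C C)" by (simp add: cinner_self_Re)
    also have "\<dots> \<le> cmod (cinner C C)" by (rule complex_Re_le_cmod)
    also have "\<dots> \<le> 4 * a * b * norm x * norm C" using cb[of x C] unfolding ident C_def .
    finally have h: "norm C * norm C \<le> (4 * a * b * norm x) * norm C" by (simp add: power2_eq_square)
    show ?thesis
    proof (cases "norm C = 0")
      case True
      then show ?thesis using a0 b0 unfolding C_def by simp
    next
      case False
      then have "norm C > 0" by simp
      then show ?thesis using h unfolding C_def[symmetric] by (simp add: mult_le_cancel_right_pos)
    qed
  qed
  have onb: "onorm (\<lambda>x. Astar (A x) - A (Astar x)) \<le> 4 * a * b"
    by (rule onorm_bound) (use a0 b0 opb in simp_all)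
  define E' where "E' = {z. cmod (z - f1) + cmod (z - f2) < 2 * a}"
  have E'open: "open E'" unfolding E'_def by (intro open_Collect_less continuous_intros)
  have E'sub: "E' \<subseteq> closure W" using ell(2) by (auto simp: E'_def elliptical_disc_def)
  have cvx: "convex W" unfolding W_def by (rule numrange_convex[OF clin])
  have "E' \<subseteq> interior (closure W)" using E'open E'sub by (simp add: interior_maximal)
  then have E'W: "E' \<subseteq> W" using convex_interior_closure[OF cvx] interior_subset by blast
  have bdd: "bounded W"
  proof -
    have "W \<subseteq> cball f1 (2 * a)"
    proof
      fix z assume "z \<in> W"
      then have "z \<in> closure W" using closure_subset by blast
      then have "cmod (z - f1) + cmod (z - f2) \<le> 2 * a" using ell(2) by (simp add: elliptical_disc_def)
      then have "cmod (z - f1) \<le> 2 * a" using norm_ge_zero[of "z - f2"] by linarith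
      then show "z \<in> cball f1 (2 * a)" by (simp add: dist_norm norm_minus_commute)
    qed
    then show ?thesis using bounded_cball bounded_subset by blast
  qed
  have Wm: "W \<in> lmeasurable" by (rule measurable_convex[OF cvx bdd])
  have E'eq: "E' = {z. b\<^sup>2 * (Re om * Re (z - m) + Im om * Im (z - m))\<^sup>2 + a\<^sup>2 * (Re om * Im (z - m) - Im om * Re (z - m))\<^sup>2 < a\<^sup>2 * b\<^sup>2}"
  proof -
    have "z \<in> E' \<longleftrightarrow> b\<^sup>2 * (Re (cnj om * (z - m)))\<^sup>2 + a\<^sup>2 * (Im (cnj om * (z - m)))\<^sup>2 < a\<^sup>2 * b\<^sup>2" for z
      unfolding E'_def using ell_core(1)[OF c0 ca b2] by (simp add: coords)
    then show ?thesis by auto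
  qed
  have pq: "(Re om)\<^sup>2 + (Im om)\<^sup>2 = 1" using om1 by (simp add: cmod_power2[symmetric])
  have "emeasure lborel E' = ennreal (pi * a * b)"
    unfolding E'eq by (rule ellipse_area[OF pq a0 b0])
  moreover have "E' \<in> sets borel" using E'open by simp
  ultimately have mE': "measure lebesgue E' = pi * a * b"
    using a0 b0 by (simp add: measure_def)
  have "pi * a * b \<le> measure lebesgue W"
    unfolding mE'[symmetric] using E'W Wm \<open>E' \<in> sets borel\<close> by (intro measure_mono_fmeasurable) auto
  then have "4 * a * b \<le> 4 / pi * measure lebesgue W"
    by (simp add: field_simps)
  then show ?thesis using onb unfolding W_def by linarith
qed


end
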